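(* $$\int_{0}^{1}\frac{\left(\pi^3-12\pi\log^2x\right)\tanh^{-1}(x)}{x\left(4\log^2x+\pi^2\right)^3}\,dx=\frac{2C-1}{16\pi},$$ where $C=\sum_{n\ge0}\frac{(-1)^n}{(2n+1)^2}$ is Catalan's constant. *)

theory Defs
  imports "HOL-Analysis.Analysis"
begin

definition catalan :: real where
  "catalan = (\<Sum>n. (-1) ^ n / (2 * real n + 1)^2)"

end

theory Submission
  imports Defs "HOL-Real_Asymp.Real_Asymp"
begin



lemma s_int0:
  fixes c :: real assumes c: "c > 0"
  shows "set_integrable lborel {0<..} (\<lambda>s. s^2 * exp (- c * s))"
    and "(LBINT s:{0<..}. s^2 * exp (- c * s)) = 2/c^3"
proof -
  let ?F = "\<lambda>s::real. - exp (- c * s) * (s^2 / c + 2 * s / c^2 + 2 / c^3)"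
  have D: "(?F has_real_derivative s^2 * exp (- c * s)) (at s)" for s
    using c by (auto intro!: derivative_eq_intros simp: field_simps power2_eq_square power3_eq_cube)
  have A: "((?F \<circ> real_of_ereal) \<longlongrightarrow> -2/c^3) (at_right 0)"
    unfolding zero_ereal_def ereal_tendsto_simps
    using c by (auto intro!: tendsto_eq_intros)
  have B: "((?F \<circ> real_of_ereal) \<longlongrightarrow> 0) (at_left \<infinity>)"
    unfolding ereal_tendsto_simps using c by real_asymp
  note r = interval_integral_FTC_nonneg[where a=0 and b=\<infinity> and F="?F", OF _ D _ _ A B]
  show "set_integrable lborel {0<..} (\<lambda>s. s^2 * exp (- c * s))"
    using r(1) by (simp add: zero_ereal_def)
  show "(LBINT s:{0<..}. s^2 * exp (- c * s)) = 2/c^3"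
    using r(2) by (simp add: interval_lebesgue_integral_0_infty)
qed



lemma quad_bound:
  fixes a b d s :: real assumes "s \<ge> 1"
  shows "\<bar>a * s^2 + b * s + d\<bar> \<le> (\<bar>a\<bar> + \<bar>b\<bar> + \<bar>d\<bar>) * s^2"
proof -
  have "\<bar>a * s^2 + b * s + d\<bar> \<le> \<bar>a\<bar> * s^2 + \<bar>b\<bar> * s + \<bar>d\<bar>"
  proof -
    have "\<bar>a * s^2 + b * s + d\<bar> \<le> \<bar>a * s^2\<bar> + \<bar>b * s\<bar> + \<bar>d\<bar>"
      using abs_triangle_ineq[of "a * s^2 + b * s" d] abs_triangle_ineq[of "a * s^2" "b * s"] by linarith
    then show ?thesis using assms by (simp add: abs_mult)
  qed
  also have "\<dots> \<le> \<bar>a\<bar> * s^2 + \<bar>b\<bar> * s^2 + \<bar>d\<bar> * s^2"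
  proof -
    have ss: "s \<le> s^2" "1 \<le> s^2" using assms mult_left_mono[of 1 s s] by (auto simp: power2_eq_square intro: order_trans[OF assms])
    show ?thesis using mult_left_mono[OF ss(1), of "\<bar>b\<bar>"] mult_left_mono[OF ss(2), of "\<bar>d\<bar>"] by simp
  qed
  finally show ?thesis by (simp add: algebra_simps)
qed

lemma s_int_cos:
  fixes c b :: real assumes c: "c > 0"
  shows "set_integrable lborel {0<..} (\<lambda>s. s^2 * exp (- c * s) * cos (b * s))"
    and "(LBINT s:{0<..}. s^2 * exp (- c * s) * cos (b * s)) = 2 * (c^3 - 3 * c * b^2) / (c^2 + b^2)^3"
proof -
  define D where "D = c^2 + b^2"
  have Dpos: "D > 0" using c by (simp add: D_def add_pos_nonneg)
  define Pr where "Pr = (\<lambda>s::real. (c / D) * s^2 + (2 * (c^2 - b^2) / D^2) * s + 2 * (c^3 - 3 * c * b^2) / D^3)"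
  define Pi where "Pi = (\<lambda>s::real. (b / D) * s^2 + (4 * c * b / D^2) * s + 2 * (3 * c^2 * b - b^3) / D^3)"
  let ?F = "\<lambda>s::real. - exp (- c * s) * (cos (b * s) * Pr s - sin (b * s) * Pi s)"
  have e1: "c * Pr s + b * Pi s - (2 * s * c / D + 2 * (c^2 - b^2) / D^2) = s^2" for s
    using Dpos unfolding Pr_def Pi_def
    apply (simp add: field_simps)
    apply (unfold D_def)
    apply algebra
    done
  define Pr' where "Pr' = (\<lambda>s::real. 2 * s * c / D + 2 * (c^2 - b^2) / D^2)"
  define Pi' where "Pi' = (\<lambda>s::real. 2 * s * b / D + 4 * c * b / D^2)"
  have e1': "c * Pr s + b * Pi s - Pr' s = s^2" for s
    using e1[of s] unfolding Pr'_def by simp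
  have e2: "- c * Pi s + b * Pr s + Pi' s = 0" for s
    using Dpos unfolding Pr_def Pi_def Pi'_def
    apply (simp add: field_simps)
    apply (unfold D_def)
    apply algebra
    done
  have dPr: "(Pr has_real_derivative Pr' s) (at s)" for s
    using Dpos unfolding Pr_def Pr'_def by (auto intro!: derivative_eq_intros simp: field_simps power2_eq_square)
  have dPi: "(Pi has_real_derivative Pi' s) (at s)" for s
    using Dpos unfolding Pi_def Pi'_def by (auto intro!: derivative_eq_intros simp: field_simps power2_eq_square)
  have D1: "(?F has_real_derivative (exp (- c * s) * (cos (b * s) * (c * Pr s + b * Pi s - Pr' s) + sin (b * s) * (- c * Pi s + b * Pr s + Pi' s)))) (at s)" for s
    by (auto intro!: derivative_eq_intros dPr dPi simp: algebra_simps)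
  have D2: "(?F has_real_derivative s^2 * exp (- c * s) * cos (b * s)) (at s)" for s
    using D1[of s] unfolding e2 e1' by (simp add: mult_ac)
  have A: "((?F \<circ> real_of_ereal) \<longlongrightarrow> - (2 * (c^3 - 3 * c * b^2) / D^3)) (at_right 0)"
  proof -
    have "isCont ?F 0"
      by (intro continuous_intros DERIV_isCont[OF dPr] DERIV_isCont[OF dPi])
    then have "(?F \<longlongrightarrow> ?F 0) (at_right 0)"
      unfolding isCont_def by (rule tendsto_within_subset) simp
    moreover have "?F 0 = - (2 * (c^3 - 3 * c * b^2) / D^3)"
      by (simp add: Pr_def minus_divide_left)
    ultimately show ?thesis unfolding zero_ereal_def ereal_tendsto_simps by simp
  qed
  have B: "((?F \<circ> real_of_ereal) \<longlongrightarrow> 0) (at_left \<infinity>)"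
    unfolding ereal_tendsto_simps
  proof (rule Lim_null_comparison)
    have "norm (?F s) \<le> exp (- c * s) * (\<bar>Pr s\<bar> + \<bar>Pi s\<bar>)" for s
    proof -
      have "\<bar>cos (b * s) * Pr s - sin (b * s) * Pi s\<bar> \<le> \<bar>Pr s\<bar> + \<bar>Pi s\<bar>"
      proof -
        have "\<bar>cos (b * s) * Pr s - sin (b * s) * Pi s\<bar> \<le> \<bar>cos (b * s) * Pr s\<bar> + \<bar>sin (b * s) * Pi s\<bar>"
          by (rule abs_triangle_ineq4)
        also have "\<dots> \<le> \<bar>Pr s\<bar> + \<bar>Pi s\<bar>"
          unfolding abs_mult
          by (intro add_mono mult_left_le_one_le abs_ge_zero abs_cos_le_one abs_sin_le_one)
        finally show ?thesis .
      qed
      then show ?thesis by (simp add: abs_mult)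
    qed
    moreover
    define K where "K = (\<bar>c / D\<bar> + \<bar>2 * (c^2 - b^2) / D^2\<bar> + \<bar>2 * (c^3 - 3 * c * b^2) / D^3\<bar>)
       + (\<bar>b / D\<bar> + \<bar>4 * c * b / D^2\<bar> + \<bar>2 * (3 * c^2 * b - b^3) / D^3\<bar>)"
    have "\<bar>Pr s\<bar> + \<bar>Pi s\<bar> \<le> K * s^2" if "s \<ge> 1" for s
    proof -
      have "\<bar>Pr s\<bar> \<le> (\<bar>c / D\<bar> + \<bar>2 * (c^2 - b^2) / D^2\<bar> + \<bar>2 * (c^3 - 3 * c * b^2) / D^3\<bar>) * s^2"
        unfolding Pr_def by (rule quad_bound[OF that])
      moreover have "\<bar>Pi s\<bar> \<le> (\<bar>b / D\<bar> + \<bar>4 * c * b / D^2\<bar> + \<bar>2 * (3 * c^2 * b - b^3) / D^3\<bar>) * s^2"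
        unfolding Pi_def by (rule quad_bound[OF that])
      ultimately show ?thesis unfolding K_def distrib_right by linarith
    qed
    ultimately have Fb: "norm (?F s) \<le> exp (- c * s) * (K * s^2)" if "s \<ge> 1" for s
      using that by (meson exp_ge_zero mult_left_mono order_trans)
    show "\<forall>\<^sub>F s in at_top. norm (?F s) \<le> exp (- c * s) * (K * s^2)"
      using eventually_ge_at_top[of "1::real"] by eventually_elim (rule Fb)
    have "((\<lambda>s. exp (- c * s) * s^2) \<longlongrightarrow> 0) at_top"
      using c by real_asymp
    then have "((\<lambda>s. K * (exp (- c * s) * s^2)) \<longlongrightarrow> 0) at_top"
      by (rule tendsto_mult_right_zero)
    then show "((\<lambda>s. exp (- c * s) * (K * s^2)) \<longlongrightarrow> 0) at_top"
      by (simp add: mult_ac)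
  qed
  show I: "set_integrable lborel {0<..} (\<lambda>s. s^2 * exp (- c * s) * cos (b * s))"
    unfolding set_integrable_def
    by (rule Bochner_Integration.integrable_bound[OF s_int0(1)[OF c, unfolded set_integrable_def]])
       (auto simp: abs_mult split: split_indicator intro!: mult_left_le)
  have "(LBINT s=0..\<infinity>. s^2 * exp (- c * s) * cos (b * s)) = 0 - (- (2 * (c^3 - 3 * c * b^2) / D^3))"
    by (rule interval_integral_FTC_integrable[OF _ _ _ _ A B])
      (use I D2 in \<open>auto simp: has_real_derivative_iff_has_vector_derivative[symmetric] 
         interval_lebesgue_integral_0_infty zero_ereal_def\<close>)
  then show "(LBINT s:{0<..}. s^2 * exp (- c * s) * cos (b * s)) = 2 * (c^3 - 3 * c * b^2) / (c^2 + b^2)^3"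
    by (simp add: interval_lebesgue_integral_0_infty D_def)
qed



lemma x_int_cos:
  fixes b :: real and k :: nat
  shows "set_integrable lborel {0<..<1} (\<lambda>x. x^k * cos (b * ln x))"
    and "(LBINT x:{0<..<1}. x^k * cos (b * ln x)) = (real k + 1) / ((real k + 1)^2 + b^2)"
proof -
  define m where "m = real k + 1"
  have m: "m > 0" by (simp add: m_def)
  define M where "M = m^2 + b^2"
  have M: "M > 0" using m by (simp add: M_def add_pos_nonneg)
  let ?G = "\<lambda>x::real. (1 / M) * (x^(k+1) * (m * cos (b * ln x) + b * sin (b * ln x)))"
  have D: "(?G has_real_derivative x^k * cos (b * ln x)) (at x)" if "x > 0" for x
    using that M
    apply (auto intro!: derivative_eq_intros simp: field_simps)
    apply (cases k; simp add: M_def m_def algebra_simps power2_eq_square)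
    done
  show I: "set_integrable lborel {0<..<1} (\<lambda>x. x^k * cos (b * ln x))"
    unfolding set_integrable_def
  proof (rule Bochner_Integration.integrable_bound)
    show "integrable lborel (\<lambda>x. indicator {0<..<1::real} x :: real)"
      by (simp add: integrable_indicator_iff)
    show "(\<lambda>x. indicator {0<..<1} x *\<^sub>R (x^k * cos (b * ln x))) \<in> borel_measurable lborel"
      by measurable
    show "AE x in lborel. norm (indicator {0<..<1} x *\<^sub>R (x^k * cos (b * ln x))) \<le> norm (indicator {0<..<1::real} x :: real)"
    proof (intro AE_I2)
      fix x :: real
      show "norm (indicator {0<..<1} x *\<^sub>R (x^k * cos (b * ln x))) \<le> norm (indicator {0<..<1::real} x :: real)"
      proof (cases "x \<in> {0<..<1}")
        case True
        then have "\<bar>x^k\<bar> \<le> 1" by (simp add: power_le_one abs_of_nonneg)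
        then have "\<bar>x^k * cos (b * ln x)\<bar> \<le> 1"
          unfolding abs_mult using abs_cos_le_one[of "b * ln x"]
          by (metis abs_ge_zero mult_le_one)
        then show ?thesis using True by simp
      qed simp
    qed
  qed
  have A: "((?G \<circ> real_of_ereal) \<longlongrightarrow> 0) (at_right 0)"
    unfolding zero_ereal_def ereal_tendsto_simps
  proof (rule Lim_null_comparison)
    show "\<forall>\<^sub>F x in at_right 0. norm (?G x) \<le> x^(k+1) * (m + \<bar>b\<bar>) / M"
      unfolding eventually_at_right_less
    proof -
      have "norm (?G x) \<le> x^(k+1) * (m + \<bar>b\<bar>) / M" if "x > 0" for x :: real
      proof -
        have "\<bar>m * cos (b * ln x) + b * sin (b * ln x)\<bar> \<le> m + \<bar>b\<bar>"
        proof -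
          have "\<bar>m * cos (b * ln x) + b * sin (b * ln x)\<bar> \<le> \<bar>m * cos (b * ln x)\<bar> + \<bar>b * sin (b * ln x)\<bar>"
            by (rule abs_triangle_ineq)
          also have "\<dots> \<le> \<bar>m\<bar> + \<bar>b\<bar>"
            unfolding abs_mult
            by (intro add_mono mult_right_le_one_le abs_ge_zero abs_cos_le_one abs_sin_le_one)
          finally show ?thesis using m by simp
        qed
        then show ?thesis using that M
          by (simp add: abs_mult divide_right_mono mult_left_mono)
      qed
      then show "\<forall>\<^sub>F x in at_right 0. norm (?G x) \<le> x^(k+1) * (m + \<bar>b\<bar>) / M"
        using eventually_at_right_less[of "0::real"] by (auto elim: eventually_mono)
    qed
    show "((\<lambda>x. x^(k+1) * (m + \<bar>b\<bar>) / M) \<longlongrightarrow> 0) (at_right 0)"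
      using M by (auto intro!: tendsto_eq_intros)
  qed
  have B: "((?G \<circ> real_of_ereal) \<longlongrightarrow> m / M) (at_left 1)"
  proof -
    have "isCont ?G 1" by (intro continuous_intros) auto
    then have "(?G \<longlongrightarrow> ?G 1) (at_left 1)"
      unfolding isCont_def by (rule tendsto_within_subset) simp
    moreover have "?G 1 = m / M" by simp
    ultimately show ?thesis unfolding one_ereal_def ereal_tendsto_simps by simp
  qed
  have "(LBINT x=0..1. x^k * cos (b * ln x)) = m / M - 0"
    by (rule interval_integral_FTC_integrable[OF _ _ _ _ A B])
      (use I D in \<open>auto simp: has_real_derivative_iff_has_vector_derivative[symmetric]
         interval_lebesgue_integrable_def zero_ereal_def one_ereal_def intro!: continuous_intros\<close>)
  then show "(LBINT x:{0<..<1}. x^k * cos (b * ln x)) = (real k + 1) / ((real k + 1)^2 + b^2)"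
    by (simp add: interval_integral_Ioo zero_ereal_def one_ereal_def M_def m_def)
qed



lemma artanh_series:
  fixes x :: real assumes "0 < x" "x < 1"
  shows "(\<lambda>n. x^(2*n) / (2 * real n + 1)) sums (artanh x / x)"
proof -
  define X where "X = (1 + x) / (1 - x)"
  have X: "X > 0" using assms by (simp add: X_def)
  have "(X - 1) / (X + 1) = x" using assms unfolding X_def by (simp add: field_simps)
  with ln_series_quadratic[OF X]
  have "(\<lambda>n. 2 * x ^ (2*n+1) / real (2*n+1)) sums ln X" by simp
  then have "(\<lambda>n. (2 * x ^ (2*n+1) / real (2*n+1)) / (2 * x)) sums (ln X / (2 * x))"
    by (rule sums_divide)
  moreover have "(2 * x ^ (2*n+1) / real (2*n+1)) / (2 * x) = x^(2*n) / (2 * real n + 1)" for n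
    using assms by simp
  moreover have "ln X / (2 * x) = artanh x / x"
    by (simp add: artanh_def X_def)
  ultimately show ?thesis by simp
qed

lemma summable_odd_sq: "summable (\<lambda>n. 1 / (2 * real n + 1)^2)"
proof (rule summable_comparison_test)
  show "summable (\<lambda>n. 1 / (real n + 1)^2)"
    using inverse_squares_sums by (simp add: sums_iff add.commute)
  show "\<exists>N. \<forall>n\<ge>N. norm (1 / (2 * real n + 1)^2) \<le> 1 / (real n + 1)^2"
    by (intro exI[of _ 0] allI impI) (simp add: divide_simps power_mono)
qed

lemma x_inner:
  fixes b :: real
  shows "set_integrable lborel {0<..<1} (\<lambda>x. cos (b * ln x) * (artanh x / x))"
    and "(LBINT x:{0<..<1}. cos (b * ln x) * (artanh x / x)) = (\<Sum>n. 1 / ((2 * real n + 1)^2 + b^2))"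
proof -
  define f where "f n x = indicator {0<..<1} x *\<^sub>R (x^(2*n) * cos (b * ln x) / (2 * real n + 1))" for n and x :: real
  have int: "integrable lborel (f n)" for n
    using set_integrable_divide[OF x_int_cos(1)[of "2*n" b], of "2 * real n + 1"]
    unfolding f_def set_integrable_def by simp
  have intval: "integral\<^sup>L lborel (f n) = 1 / ((2 * real n + 1)^2 + b^2)" for n
  proof -
    have "integral\<^sup>L lborel (f n) = (LBINT x:{0<..<1}. x^(2*n) * cos (b * ln x)) / (2 * real n + 1)"
      unfolding f_def set_lebesgue_integral_def by (simp add: divide_simps)
    also have "\<dots> = 1 / ((2 * real n + 1)^2 + b^2)"
      unfolding x_int_cos(2) by simp
    finally show ?thesis .
  qed
  have ptw: "(\<lambda>n. f n x) sums (indicator {0<..<1} x *\<^sub>R (cos (b * ln x) * (artanh x / x)))" for x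
  proof (cases "x \<in> {0<..<1}")
    case True
    then have "(\<lambda>n. cos (b * ln x) * (x^(2*n) / (2 * real n + 1))) sums (cos (b * ln x) * (artanh x / x))"
      by (intro sums_mult artanh_series) auto
    then show ?thesis using True unfolding f_def by (simp add: mult_ac)
  next
    case False
    then show ?thesis unfolding f_def by simp
  qed
  have abs_sum: "summable (\<lambda>n. norm (f n x))" for x
  proof (cases "x \<in> {0<..<1}")
    case True
    show ?thesis
    proof (rule summable_comparison_test)
      show "summable (\<lambda>n. x^(2*n) / (2 * real n + 1))"
        using artanh_series[of x] True by (auto simp: sums_iff)
      show "\<exists>N. \<forall>n\<ge>N. norm (norm (f n x)) \<le> x^(2*n) / (2 * real n + 1)"
        using True abs_cos_le_one[of "b * ln x"]
        by (auto simp: f_def abs_mult divide_right_mono mult_left_le)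
    qed
  next
    case False
    then show ?thesis unfolding f_def by simp
  qed
  have normint: "(\<integral>x. norm (f n x) \<partial>lborel) \<le> 1 / (2 * real n + 1)^2" for n
  proof -
    have "(\<integral>x. norm (f n x) \<partial>lborel) \<le> (\<integral>x. indicator {0<..<1} x *\<^sub>R (x^(2*n) * cos (0 * ln x) / (2 * real n + 1)) \<partial>lborel)"
    proof (rule integral_mono)
      show "integrable lborel (\<lambda>x. norm (f n x))" using int by simp
      show "integrable lborel (\<lambda>x. indicator {0<..<1} x *\<^sub>R (x^(2*n) * cos (0 * ln x) / (2 * real n + 1)))"
        using set_integrable_divide[OF x_int_cos(1)[of "2*n" 0], of "2 * real n + 1"]
        unfolding set_integrable_def by simp
      show "norm (f n x) \<le> indicator {0<..<1} x *\<^sub>R (x^(2*n) * cos (0 * ln x) / (2 * real n + 1))" for x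
        using abs_cos_le_one[of "b * ln x"]
        by (auto simp: f_def abs_mult divide_right_mono mult_left_le split: split_indicator)
    qed
    also have "\<dots> = (LBINT x:{0<..<1}. x^(2*n) * cos (0 * ln x)) / (2 * real n + 1)"
      unfolding set_lebesgue_integral_def by (simp add: divide_simps)
    also have "\<dots> = 1 / (2 * real n + 1)^2"
      by (subst x_int_cos(2)) simp
    finally show ?thesis .
  qed
  have sumint: "summable (\<lambda>n. \<integral>x. norm (f n x) \<partial>lborel)"
    by (rule summable_comparison_test[OF _ summable_odd_sq])
       (use normint in \<open>auto intro!: exI[of _ 0]\<close>)
  note S = integrable_suminf[OF int AE_I2[OF abs_sum] sumint]
       integral_suminf[OF int AE_I2[OF abs_sum] sumint]
  have eq: "(\<lambda>x. \<Sum>n. f n x) = (\<lambda>x. indicator {0<..<1} x *\<^sub>R (cos (b * ln x) * (artanh x / x)))"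
    using ptw by (auto simp: sums_iff)
  show "set_integrable lborel {0<..<1} (\<lambda>x. cos (b * ln x) * (artanh x / x))"
    using S(1) unfolding eq set_integrable_def .
  show "(LBINT x:{0<..<1}. cos (b * ln x) * (artanh x / x)) = (\<Sum>n. 1 / ((2 * real n + 1)^2 + b^2))"
    using S(2) unfolding eq set_lebesgue_integral_def intval .
qed



lemma Digamma_reflection_aux:
  fixes z :: complex
  assumes z: "z \<notin> \<int>"
  shows "Digamma z - Digamma (1 - z) = - of_real pi * cos (of_real pi * z) / sin (of_real pi * z)"
proof -
  have z1: "1 - z \<notin> \<int>"
    using z Ints_diff[of 1 "1 - z"] by auto
  have n1: "z \<notin> \<int>\<^sub>\<le>\<^sub>0" "1 - z \<notin> \<int>\<^sub>\<le>\<^sub>0"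
    using z z1 nonpos_Ints_subset_Ints by auto
  have sn: "sin (of_real pi * z) \<noteq> 0"
  proof
    assume "sin (of_real pi * z) = 0"
    then obtain n :: int where "of_real pi * z = of_real (of_int n * pi)"
      by (auto simp: sin_eq_0)
    then have "z = of_int n" by (simp add: field_simps)
    with z show False by simp
  qed
  have d1: "((\<lambda>z. Gamma z * Gamma (1 - z)) has_field_derivative
      (Gamma z * Gamma (1 - z) * (Digamma z - Digamma (1 - z)))) (at z)"
    using n1 by (auto intro!: derivative_eq_intros simp: algebra_simps)
  have d2: "((\<lambda>z. of_real pi / sin (of_real pi * z)) has_field_derivative
      (- (of_real pi * (cos (of_real pi * z) * of_real pi)) / (sin (of_real pi * z))^2)) (at z)"
    using sn by (auto intro!: derivative_eq_intros simp: power2_eq_square)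
  have eqf: "(\<lambda>z::complex. Gamma z * Gamma (1 - z)) = (\<lambda>z. of_real pi / sin (of_real pi * z))"
    by (rule ext) (rule Gamma_reflection_complex)
  have "Gamma z * Gamma (1 - z) * (Digamma z - Digamma (1 - z)) =
        - (of_real pi * (cos (of_real pi * z) * of_real pi)) / (sin (of_real pi * z))^2"
    using DERIV_unique[OF d1 d2[folded eqf]] .
  then have "of_real pi / sin (of_real pi * z) * (Digamma z - Digamma (1 - z)) =
        - (of_real pi * (cos (of_real pi * z) * of_real pi)) / (sin (of_real pi * z))^2"
    by (simp add: Gamma_reflection_complex)
  note H = this
  have pi0: "(of_real pi :: complex) \<noteq> 0" by simp
  have "Digamma z - Digamma (1 - z) = (sin (of_real pi * z) / of_real pi) *
     (of_real pi / sin (of_real pi * z) * (Digamma z - Digamma (1 - z)))"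
    using sn pi0 by (simp add: field_simps)
  also have "\<dots> = (sin (of_real pi * z) / of_real pi) *
     (- (of_real pi * (cos (of_real pi * z) * of_real pi)) / (sin (of_real pi * z))^2)"
    unfolding H ..
  also have "\<dots> = - of_real pi * cos (of_real pi * z) / sin (of_real pi * z)"
    using sn pi0 by (simp add: field_simps power2_eq_square)
  finally show ?thesis .
qed

lemma inv_diff_aux:
  fixes s :: real and k :: nat
  defines "z \<equiv> 1/2 + \<i> * of_real s"
  shows "inverse (1 - z + of_nat k) - inverse (z + of_nat k) =
     \<i> * of_real (8 * s / ((2 * real k + 1)^2 + (2 * s)^2))"
proof -
  define a where "a = real k + 1/2"
  have a: "a > 0" by (simp add: a_def)
  have e1: "1 - z + of_nat k = Complex a (- s)" unfolding z_def a_def by (simp add: complex_eq_iff)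
  have e2: "z + of_nat k = Complex a s" unfolding z_def a_def by (simp add: complex_eq_iff)
  have d: "(2 * real k + 1)^2 + (2 * s)^2 = 4 * (a^2 + s^2)" unfolding a_def by (simp add: algebra_simps power2_eq_square)
  have pos: "a^2 + s^2 > 0" using a by (simp add: add_pos_nonneg)
  show ?thesis unfolding e1 e2 d using pos
    apply (simp add: complex_eq_iff inverse_complex_def power2_eq_square field_simps)
    apply (simp add: divide_eq_eq algebra_simps)
    done
qed


lemma summable_T:
  fixes s :: real
  shows "summable (\<lambda>k. 1 / ((2 * real k + 1)^2 + (2 * s)^2))"
proof (rule summable_comparison_test)
  show "summable (\<lambda>k. 1 / (real k + 1)^2)"
    using inverse_squares_sums by (simp add: sums_iff add.commute)
  show "\<exists>N. \<forall>n\<ge>N. norm (1 / ((2 * real n + 1)^2 + (2 * s)^2)) \<le> 1 / (real n + 1)^2"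
    by (intro exI[of _ 0] allI impI) (simp add: divide_simps power_mono add_pos_nonneg add_increasing2)
qed

lemma Tsum:
  fixes s :: real assumes s: "s > 0"
  shows "(\<Sum>k. 1 / ((2 * real k + 1)^2 + (2 * s)^2)) =
     pi / (8 * s) * ((exp (pi * s) - inverse (exp (pi * s))) / (exp (pi * s) + inverse (exp (pi * s))))"
proof -
  define z :: complex where "z = 1/2 + \<i> * of_real s"
  have zI: "z \<notin> \<int>"
  proof
    assume "z \<in> \<int>"
    then obtain n where "z = of_int n" by (auto elim: Ints_cases)
    then have "Im z = 0" by simp
    with s show False by (simp add: z_def)
  qed
  have z0: "z \<noteq> 0" "1 - z \<noteq> 0" using zI by auto
  have S1: "(\<lambda>k. inverse (of_nat (Suc k)) - inverse (z + of_nat k)) sums (Digamma z + euler_mascheroni)"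
    using summable_sums[OF summable_Digamma[OF z0(1)]] by (simp add: Digamma_def)
  have S2: "(\<lambda>k. inverse (of_nat (Suc k)) - inverse ((1 - z) + of_nat k)) sums (Digamma (1 - z) + euler_mascheroni)"
    using summable_sums[OF summable_Digamma[OF z0(2)]] by (simp add: Digamma_def)
  have "(\<lambda>k. inverse (1 - z + of_nat k) - inverse (z + of_nat k)) sums (Digamma z - Digamma (1 - z))"
    using sums_diff[OF S1 S2] by (simp add: algebra_simps)
  then have A: "(\<lambda>k. \<i> * of_real (8 * s / ((2 * real k + 1)^2 + (2 * s)^2))) sums (Digamma z - Digamma (1 - z))"
    unfolding z_def inv_diff_aux .
  define R where "R = (\<Sum>k. 1 / ((2 * real k + 1)^2 + (2 * s)^2))"
  have "(\<lambda>k. 8 * s * (1 / ((2 * real k + 1)^2 + (2 * s)^2))) sums (8 * s * R)"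
    unfolding R_def by (intro sums_mult summable_sums summable_T)
  then have "(\<lambda>k. of_real (8 * s * (1 / ((2 * real k + 1)^2 + (2 * s)^2))) :: complex) sums of_real (8 * s * R)"
    by (rule sums_of_real)
  then have B: "(\<lambda>k. \<i> * of_real (8 * s / ((2 * real k + 1)^2 + (2 * s)^2))) sums (\<i> * of_real (8 * s * R))"
    by (intro sums_mult) simp
  have C: "Digamma z - Digamma (1 - z) = \<i> * of_real (pi * ((exp (pi * s) - inverse (exp (pi * s))) / (exp (pi * s) + inverse (exp (pi * s)))))"
  proof -
    define y where "y = pi * s"
    have pz: "of_real pi * z = of_real (pi/2) + \<i> * of_real y"
      unfolding z_def y_def by (simp add: algebra_simps)
    have c1: "cos (of_real pi * z) = - sin (\<i> * of_real y)"
      unfolding pz cos_add by (simp add: cos_of_real sin_of_real)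
    have s1: "sin (of_real pi * z) = cos (\<i> * of_real y)"
      unfolding pz sin_add by (simp add: cos_of_real sin_of_real)
    have sy: "sin (\<i> * of_real y) = \<i> * of_real ((exp y - inverse (exp y)) / 2)"
      by (simp add: sin_i_times exp_of_real)
    have cy: "cos (\<i> * of_real y) = of_real ((exp y + inverse (exp y)) / 2)"
      using cosh_complex[of "of_real y"] by (simp add: exp_of_real)
    have pos: "exp y + inverse (exp y) > 0" by (simp add: add_pos_pos)
    have gen: "- (of_real p) * (- (\<i> * of_real a)) / of_real b = \<i> * of_real (p * (a / b))" for p a b :: real
      by (cases "b = 0") (simp_all add: field_simps)
    have gen2: "(a / 2) / (b / 2) = a / b" for a b :: real by simp
    have r: "((exp y - inverse (exp y)) / 2) / ((exp y + inverse (exp y)) / 2) = (exp y - inverse (exp y)) / (exp y + inverse (exp y))"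
      by (rule gen2)
    show ?thesis
      unfolding Digamma_reflection_aux[OF zI] c1 s1 sy cy y_def[symmetric] gen r ..
  qed
  have "\<i> * of_real (8 * s * R) = \<i> * of_real (pi * ((exp (pi * s) - inverse (exp (pi * s))) / (exp (pi * s) + inverse (exp (pi * s)))))"
    using sums_unique2[OF B A] C by simp
  then have "8 * s * R = pi * ((exp (pi * s) - inverse (exp (pi * s))) / (exp (pi * s) + inverse (exp (pi * s))))"
    by (metis complex_i_not_zero mult_left_cancel of_real_eq_iff)
  note EQ = this
  have gen3: "8 * s * R' = pi * X \<Longrightarrow> R' = pi / (8 * s) * X" for R' X :: real
    using s by (simp add: field_simps)
  show ?thesis unfolding R_def[symmetric] by (rule gen3[OF EQ])
qed






lemma s_int1:
  fixes a :: real assumes a: "a > 0"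
  shows "set_integrable lborel {0<..} (\<lambda>s. s * exp (- a * s))"
    and "(LBINT s:{0<..}. s * exp (- a * s)) = 1 / a^2"
proof -
  let ?F = "\<lambda>s::real. - exp (- a * s) * (s / a + 1 / a^2)"
  have D: "(?F has_real_derivative s * exp (- a * s)) (at s)" for s
    using a by (auto intro!: derivative_eq_intros simp: field_simps power2_eq_square)
  have A: "((?F \<circ> real_of_ereal) \<longlongrightarrow> -1 / a^2) (at_right 0)"
    unfolding zero_ereal_def ereal_tendsto_simps
    using a by (auto intro!: tendsto_eq_intros)
  have B: "((?F \<circ> real_of_ereal) \<longlongrightarrow> 0) (at_left \<infinity>)"
    unfolding ereal_tendsto_simps using a by real_asymp
  note r = interval_integral_FTC_nonneg[where a=0 and b=\<infinity> and F="?F", OF _ D _ _ A B]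
  show "set_integrable lborel {0<..} (\<lambda>s. s * exp (- a * s))"
    using r(1) by (simp add: zero_ereal_def)
  show "(LBINT s:{0<..}. s * exp (- a * s)) = 1 / a^2"
    using r(2) by (simp add: interval_lebesgue_integral_0_infty)
qed


lemma summable_odd_sq': "summable (\<lambda>n. 1 / (2 * real n + 1)^2)"
proof (rule summable_comparison_test)
  show "summable (\<lambda>n. 1 / (real n + 1)^2)"
    using inverse_squares_sums by (simp add: sums_iff add.commute)
  have "norm (1 / (2 * real n + 1)^2) \<le> 1 / (real n + 1)^2" for n
  proof -
    have "1 / (2 * real n + 1)^2 \<le> 1 / (real n + 1)^2"
      by (rule frac_le) (auto intro!: power_mono)
    then show ?thesis by simp
  qed
  then show "\<exists>N. \<forall>n\<ge>N. norm (1 / (2 * real n + 1)^2) \<le> 1 / (real n + 1)^2"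
    by blast
qed

lemma catalan_sums2:
  "(\<lambda>j. (-1)^j * (1 / (2 * real j + 1)^2 - 1 / (2 * real j + 3)^2)) sums (2 * catalan - 1)"
proof -
  have sm: "summable (\<lambda>n. (-1) ^ n / (2 * real n + 1)^2)"
    by (rule summable_comparison_test[OF _ summable_odd_sq'])
       (auto intro!: exI[of _ 0] simp: abs_mult power_abs)
  then have S1: "(\<lambda>n. (-1) ^ n / (2 * real n + 1)^2) sums catalan"
    unfolding catalan_def by (rule summable_sums)
  then have "(\<lambda>n. (-1) ^ Suc n / (2 * real (Suc n) + 1)^2) sums (catalan - 1)"
    by (subst sums_Suc_iff) simp
  then have "(\<lambda>n. - ((-1) ^ Suc n / (2 * real (Suc n) + 1)^2)) sums (- (catalan - 1))"
    by (rule sums_minus)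
  then have S2: "(\<lambda>n. (-1) ^ n / (2 * real n + 3)^2) sums (1 - catalan)"
    by (simp add: algebra_simps)
  have "(\<lambda>n. (-1) ^ n / (2 * real n + 1)^2 - (-1) ^ n / (2 * real n + 3)^2) sums (catalan - (1 - catalan))"
    by (rule sums_diff[OF S1 S2])
  then show ?thesis by (simp add: algebra_simps)
qed

lemma exp_series:
  fixes s :: real assumes s: "s > 0"
  shows "(\<lambda>j. (-1)^j * s * (exp (- ((2 * real j + 1) * pi * s)) - exp (- ((2 * real j + 3) * pi * s))))
     sums (s * exp (- (pi * s)) * ((exp (pi * s) - inverse (exp (pi * s))) / (exp (pi * s) + inverse (exp (pi * s)))))"
proof -
  define q where "q = exp (- (2 * pi * s))"
  have q: "0 < q" "q < 1" using s by (auto simp: q_def)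
  have e: "exp (- ((2 * real j + c) * pi * s)) = exp (- (c * pi * s)) * q^j" for j c
  proof -
    have "exp (- ((2 * real j + c) * pi * s)) = exp (- (c * pi * s) + real j * (- (2 * pi * s)))"
      by (rule arg_cong[where f=exp]) (simp add: algebra_simps)
    also have "\<dots> = exp (- (c * pi * s)) * q^j"
      unfolding q_def by (simp only: exp_add exp_of_nat_mult)
    finally show ?thesis .
  qed
  have G: "(\<lambda>j. (- q)^j) sums (1 / (1 - (- q)))"
    by (rule geometric_sums) (use q in simp)
  then have "(\<lambda>j. s * (exp (- (1 * pi * s)) - exp (- (3 * pi * s))) * (- q)^j) sums
       (s * (exp (- (1 * pi * s)) - exp (- (3 * pi * s))) * (1 / (1 - (- q))))"
    by (rule sums_mult)
  note M = this
  have T: "s * (exp (- (1 * pi * s)) - exp (- (3 * pi * s))) * (- q)^j =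
     (-1)^j * s * (exp (- ((2 * real j + 1) * pi * s)) - exp (- ((2 * real j + 3) * pi * s)))" for j
    unfolding e power_minus[of q] by (simp only: mult_ac right_diff_distrib left_diff_distrib)
  have V: "s * (exp (- (1 * pi * s)) - exp (- (3 * pi * s))) * (1 / (1 - (- q))) =
      s * exp (- (pi * s)) * ((exp (pi * s) - inverse (exp (pi * s))) / (exp (pi * s) + inverse (exp (pi * s))))"
  proof -
    define E where "E = exp (pi * s)"
    have E: "E > 0" by (simp add: E_def)
    have x1: "exp (- (1 * pi * s)) = 1 / E" by (simp add: E_def exp_minus inverse_eq_divide)
    have E3: "exp (3 * (pi * s)) = E^3" unfolding E_def using exp_of_nat_mult[of 3 "pi * s"] by simp
    have E2: "exp (2 * (pi * s)) = E^2" unfolding E_def using exp_of_nat_mult[of 2 "pi * s"] by simp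
    have x3: "exp (- (3 * pi * s)) = 1 / E^3"
      using E3 by (simp add: exp_minus mult.assoc inverse_eq_divide)
    have qq: "q = 1 / E^2" using E2 by (simp add: q_def exp_minus mult.assoc inverse_eq_divide)
    have x1': "exp (- (pi * s)) = 1 / E" by (simp add: E_def exp_minus inverse_eq_divide)
    show ?thesis unfolding x1 x3 qq x1' E_def[symmetric] using E
      apply (simp add: field_simps power2_eq_square power3_eq_cube)
      apply (metis (no_types, lifting) distrib_left mult_divide_mult_cancel_left_if right_diff_distrib')
      done
  qed
  show ?thesis using M unfolding T V .
qed




lemma s_outer:
  defines "Tc \<equiv> \<lambda>s::real. pi / (8 * s) * ((exp (pi * s) - inverse (exp (pi * s))) / (exp (pi * s) + inverse (exp (pi * s))))"
  shows "set_integrable lborel {0<..} (\<lambda>s. s^2 * exp (- pi * s) / 2 * Tc s)"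
    and "(LBINT s:{0<..}. s^2 * exp (- pi * s) / 2 * Tc s) = (2 * catalan - 1) / (16 * pi)"
proof -
  define a where "a j s = (-1)^j * s * (exp (- ((2 * real j + 1) * pi * s)) - exp (- ((2 * real j + 3) * pi * s)))" for j and s :: real
  define V where "V s = s * exp (- (pi * s)) * ((exp (pi * s) - inverse (exp (pi * s))) / (exp (pi * s) + inverse (exp (pi * s))))" for s :: real
  define f where "f j s = indicator {0<..} s *\<^sub>R a j s" for j and s :: real
  have c1: "(2 * real j + 1) * pi > 0" "(2 * real j + 3) * pi > 0" for j
    by (auto intro!: mult_pos_pos)
  have ee: "exp (- ((2 * real j + c) * pi * s)) = exp (- ((2 * real j + c) * pi) * s)" for j c s
    by (simp add: mult.assoc)
  have int1: "set_integrable lborel {0<..} (\<lambda>s. s * exp (- ((2 * real j + c) * pi * s)))"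
    and val1: "(LBINT s:{0<..}. s * exp (- ((2 * real j + c) * pi * s))) = 1 / ((2 * real j + c) * pi)^2"
    if "c > 0" for j c
    using s_int1[of "(2 * real j + c) * pi"] that unfolding ee
    by (auto intro!: mult_pos_pos add_pos_nonneg)
  have intf: "integrable lborel (f j)" for j
  proof -
    have "set_integrable lborel {0<..} (\<lambda>s. (-1)^j * (s * exp (- ((2 * real j + 1) * pi * s)) - s * exp (- ((2 * real j + 3) * pi * s))))"
      by (intro set_integrable_mult_right set_integral_diff int1) auto
    then show ?thesis unfolding f_def a_def set_integrable_def by (simp add: algebra_simps)
  qed
  have valf: "integral\<^sup>L lborel (f j) = (-1)^j * (1 / (2 * real j + 1)^2 - 1 / (2 * real j + 3)^2) / pi^2" for j
  proof -
    have "integral\<^sup>L lborel (f j) = (LBINT s:{0<..}. (-1)^j * (s * exp (- ((2 * real j + 1) * pi * s)) - s * exp (- ((2 * real j + 3) * pi * s))))"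
      unfolding f_def a_def set_lebesgue_integral_def by (simp add: algebra_simps)
    also have "\<dots> = (-1)^j * ((LBINT s:{0<..}. s * exp (- ((2 * real j + 1) * pi * s))) - (LBINT s:{0<..}. s * exp (- ((2 * real j + 3) * pi * s))))"
      by (subst set_integral_mult_right) (subst set_integral_diff(2), (intro int1, simp)+, rule refl)
    also have "\<dots> = (-1)^j * (1 / (2 * real j + 1)^2 - 1 / (2 * real j + 3)^2) / pi^2"
      by (simp add: val1 power_mult_distrib divide_simps)
    finally show ?thesis .
  qed
  have absa: "\<bar>a j s\<bar> \<le> s * exp (- (pi * s)) * exp (- (2 * pi * s)) ^ j" if "s > 0" for j s
  proof -
    have e: "exp (- ((2 * real j + c) * pi * s)) = exp (- (c * pi * s)) * exp (- (2 * pi * s))^j" for c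
    proof -
      have "exp (- ((2 * real j + c) * pi * s)) = exp (- (c * pi * s) + real j * (- (2 * pi * s)))"
        by (rule arg_cong[where f=exp]) (simp add: algebra_simps)
      also have "\<dots> = exp (- (c * pi * s)) * exp (- (2 * pi * s))^j"
        by (simp only: exp_add exp_of_nat_mult)
      finally show ?thesis .
    qed
    have le: "exp (- ((2 * real j + 3) * pi * s)) \<le> exp (- ((2 * real j + 1) * pi * s))"
      using that by (simp add: mult_right_mono)
    have "\<bar>a j s\<bar> = s * (exp (- ((2 * real j + 1) * pi * s)) - exp (- ((2 * real j + 3) * pi * s)))"
      unfolding a_def using that le by (simp add: abs_mult)
    also have "\<dots> \<le> s * exp (- ((2 * real j + 1) * pi * s))"
      using that by (simp add: mult_left_mono)
    also have "\<dots> = s * exp (- (pi * s)) * exp (- (2 * pi * s)) ^ j"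
      unfolding e by simp
    finally show ?thesis .
  qed
  have abs_sum: "summable (\<lambda>j. norm (f j s))" for s
  proof (cases "s > 0")
    case True
    show ?thesis
    proof (rule summable_comparison_test)
      have "summable (\<lambda>j. exp (- (2 * pi * s)) ^ j)"
        by (rule summable_geometric) (use True in simp)
      then show "summable (\<lambda>j. s * exp (- (pi * s)) * exp (- (2 * pi * s)) ^ j)"
        by (rule summable_mult)
      show "\<exists>N. \<forall>j\<ge>N. norm (norm (f j s)) \<le> s * exp (- (pi * s)) * exp (- (2 * pi * s)) ^ j"
        using absa[OF True] True by (auto simp: f_def)
    qed
  next
    case False
    then show ?thesis by (simp add: f_def)
  qed
  have normf: "(\<integral>s. norm (f j s) \<partial>lborel) \<le> 1 / ((2 * real j + 1) * pi)^2" for j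
  proof -
    have "(\<integral>s. norm (f j s) \<partial>lborel) \<le> (\<integral>s. indicator {0<..} s *\<^sub>R (s * exp (- ((2 * real j + 1) * pi * s))) \<partial>lborel)"
    proof (rule integral_mono)
      show "integrable lborel (\<lambda>s. norm (f j s))" using intf by simp
      show "integrable lborel (\<lambda>s. indicator {0<..} s *\<^sub>R (s * exp (- ((2 * real j + 1) * pi * s))))"
        using int1[of 1 j] unfolding set_integrable_def by simp
      show "norm (f j s) \<le> indicator {0<..} s *\<^sub>R (s * exp (- ((2 * real j + 1) * pi * s)))" for s
      proof (cases "s > 0")
        case True
        have "\<bar>a j s\<bar> \<le> s * exp (- ((2 * real j + 1) * pi * s))"
        proof -
          have le: "exp (- ((2 * real j + 3) * pi * s)) \<le> exp (- ((2 * real j + 1) * pi * s))"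
            using True by (simp add: mult_right_mono)
          have "\<bar>a j s\<bar> = s * (exp (- ((2 * real j + 1) * pi * s)) - exp (- ((2 * real j + 3) * pi * s)))"
            unfolding a_def using True le by (simp add: abs_mult)
          also have "\<dots> \<le> s * exp (- ((2 * real j + 1) * pi * s))"
            using True by (simp add: mult_left_mono)
          finally show ?thesis .
        qed
        then show ?thesis using True by (simp add: f_def)
      qed (simp add: f_def)
    qed
    also have "\<dots> = 1 / ((2 * real j + 1) * pi)^2"
      using val1[of 1 j] unfolding set_lebesgue_integral_def by simp
    finally show ?thesis .
  qed
  have sumint: "summable (\<lambda>j. \<integral>s. norm (f j s) \<partial>lborel)"
  proof (rule summable_comparison_test)
    show "summable (\<lambda>j. 1 / (2 * real j + 1)^2 / pi^2)"
      by (rule summable_divide[OF summable_odd_sq'])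
    show "\<exists>N. \<forall>j\<ge>N. norm (\<integral>s. norm (f j s) \<partial>lborel) \<le> 1 / (2 * real j + 1)^2 / pi^2"
      using normf by (auto simp: power_mult_distrib)
  qed
  note S = integrable_suminf[OF intf AE_I2[OF abs_sum] sumint]
       sums_integral[OF intf AE_I2[OF abs_sum] sumint]
  have ptw: "(\<lambda>j. f j s) sums (indicator {0<..} s *\<^sub>R V s)" for s
  proof (cases "s > 0")
    case True
    then show ?thesis using exp_series[OF True] unfolding f_def a_def V_def by simp
  next
    case False
    then show ?thesis by (simp add: f_def)
  qed
  have eq: "(\<lambda>s. \<Sum>j. f j s) = (\<lambda>s. indicator {0<..} s *\<^sub>R V s)"
    using ptw by (auto simp: sums_iff)
  have SV: "(\<lambda>j. integral\<^sup>L lborel (f j)) sums (\<integral>s. indicator {0<..} s *\<^sub>R V s \<partial>lborel)"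
    using S(2) unfolding eq .
  have "(\<lambda>j. integral\<^sup>L lborel (f j)) sums ((2 * catalan - 1) / pi^2)"
    unfolding valf by (rule sums_divide[OF catalan_sums2])
  then have IV: "(\<integral>s. indicator {0<..} s *\<^sub>R V s \<partial>lborel) = (2 * catalan - 1) / pi^2"
    using SV sums_unique2 by blast
  have intV: "integrable lborel (\<lambda>s. indicator {0<..} s *\<^sub>R V s)"
    using S(1) unfolding eq .
  have pt2: "indicator {0<..} s *\<^sub>R (s^2 * exp (- pi * s) / 2 * Tc s) = pi / 16 * (indicator {0<..} s *\<^sub>R V s)" for s
  proof (cases "s > 0")
    case True
    have g: "s' \<noteq> 0 \<Longrightarrow> s'^2 * e / 2 * (pi / (8 * s') * r) = pi / 16 * (s' * e * r)" for s' e r :: real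
      by (simp add: field_simps power2_eq_square)
    have "s^2 * exp (- pi * s) / 2 * Tc s = pi / 16 * (s * exp (- pi * s) *
        ((exp (pi * s) - inverse (exp (pi * s))) / (exp (pi * s) + inverse (exp (pi * s)))))"
      unfolding Tc_def by (rule g) (use True in simp)
    also have "\<dots> = pi / 16 * V s" unfolding V_def by simp
    finally have "s^2 * exp (- pi * s) / 2 * Tc s = pi / 16 * V s" .
    then show ?thesis using True by simp
  qed (simp)
  show "set_integrable lborel {0<..} (\<lambda>s. s^2 * exp (- pi * s) / 2 * Tc s)"
    unfolding set_integrable_def pt2 using intV by simp
  show "(LBINT s:{0<..}. s^2 * exp (- pi * s) / 2 * Tc s) = (2 * catalan - 1) / (16 * pi)"
    unfolding set_lebesgue_integral_def pt2 using IV by (simp add: power2_eq_square)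
qed




theorem mainTheorem11:
  shows "((\<lambda>x::real. (pi^3 - 12 * pi * (ln x)^2) * artanh x /
             (x * (4 * (ln x)^2 + pi^2)^3))
          has_integral ((2 * catalan - 1) / (16 * pi))) {0<..<1}"
proof -
  define h where "h x = (pi^3 - 12 * pi * (ln x)^2) * artanh x / (x * (4 * (ln x)^2 + pi^2)^3)" for x :: real
  define K where "K x = artanh x / x" for x :: real
  define G where "G x s = indicator {0<..<1} x * (indicator {0<..} s * (s^2 * exp (- pi * s) * cos (2 * ln x * s)) * (K x / 2))" for x s :: real
  define Tc where "Tc s = pi / (8 * s) * ((exp (pi * s) - inverse (exp (pi * s))) / (exp (pi * s) + inverse (exp (pi * s))))" for s :: real
  have Gm[measurable]: "(\<lambda>(x, s). G x s) \<in> borel_measurable (lborel \<Otimes>\<^sub>M lborel)"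
    unfolding G_def K_def artanh_def by measurable
  have Kpos: "K x \<ge> 0" if "x \<in> {0<..<1}" for x
    using that unfolding K_def artanh_def by (auto intro!: divide_nonneg_pos ln_ge_zero)
  have intK: "integrable lborel (\<lambda>x. indicator {0<..<1} x * K x)"
    using x_inner(1)[of 0] unfolding set_integrable_def K_def by simp
  have intS: "integrable lborel (\<lambda>s. G x s)" for x
  proof -
    have "integrable lborel (\<lambda>s. indicator {0<..} s * (s^2 * exp (- pi * s) * cos (2 * ln x * s)))"
      using s_int_cos(1)[of pi "2 * ln x"] unfolding set_integrable_def by simp
    then show ?thesis unfolding G_def by simp
  qed
  have inner_s: "(\<integral>s. G x s \<partial>lborel) = indicator {0<..<1} x * h x" for x
  proof (cases "x \<in> {0<..<1}")
    case True
    have "(\<integral>s. G x s \<partial>lborel) = (LBINT s:{0<..}. s^2 * exp (- pi * s) * cos (2 * ln x * s)) * (K x / 2)"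
      using True unfolding G_def set_lebesgue_integral_def by simp
    also have "\<dots> = 2 * (pi^3 - 3 * pi * (2 * ln x)^2) / (pi^2 + (2 * ln x)^2)^3 * (K x / 2)"
      using s_int_cos(2)[of pi "2 * ln x"] by simp
    also have "\<dots> = h x"
    proof -
      have g: "2 * A / D * ((t / y) / 2) = A * t / (y * D)" for A D t y :: real
        by (cases "y = 0"; cases "D = 0") (simp_all add: field_simps)
      have e1: "pi^3 - 3 * pi * (2 * ln x)^2 = pi^3 - 12 * pi * (ln x)^2"
        by (simp add: power_mult_distrib)
      have e2: "pi^2 + (2 * ln x)^2 = 4 * (ln x)^2 + pi^2"
        by (simp add: power_mult_distrib)
      show ?thesis unfolding h_def K_def g e1 e2 ..
    qed
    finally show ?thesis using True by simp
  qed (simp add: G_def)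
  have inner_s_norm: "(\<integral>s. norm (G x s) \<partial>lborel) \<le> indicator {0<..<1} x * K x / pi^3" for x
  proof (cases "x \<in> {0<..<1}")
    case True
    have "(\<integral>s. norm (G x s) \<partial>lborel) \<le> (\<integral>s. indicator {0<..} s * (s^2 * exp (- pi * s)) * (K x / 2) \<partial>lborel)"
    proof (rule integral_mono)
      show "integrable lborel (\<lambda>s. norm (G x s))" using intS by simp
      show "integrable lborel (\<lambda>s. indicator {0<..} s * (s^2 * exp (- pi * s)) * (K x / 2))"
        using s_int0(1)[of pi] unfolding set_integrable_def by simp
      show "norm (G x s) \<le> indicator {0<..} s * (s^2 * exp (- pi * s)) * (K x / 2)" for s
        using True Kpos[OF True] abs_cos_le_one[of "2 * ln x * s"]
          mult_left_le_one_le[OF Kpos[OF True] abs_ge_zero abs_cos_le_one[of "2 * ln x * s"]]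
        by (auto simp: G_def abs_mult split: split_indicator intro!: mult_right_mono mult_left_le)
    qed
    also have "\<dots> = (LBINT s:{0<..}. s^2 * exp (- pi * s)) * (K x / 2)"
      unfolding set_lebesgue_integral_def by simp
    also have "\<dots> = indicator {0<..<1} x * K x / pi^3"
      using True s_int0(2)[of pi] by simp
    finally show ?thesis .
  qed (simp add: G_def)
  have intnorm: "integrable lborel (\<lambda>x. \<integral>s. norm (G x s) \<partial>lborel)"
  proof (rule Bochner_Integration.integrable_bound)
    show "integrable lborel (\<lambda>x. indicator {0<..<1} x * K x / pi^3)"
      using intK by simp
    show "(\<lambda>x. \<integral>s. norm (G x s) \<partial>lborel) \<in> borel_measurable lborel"
      by measurable
    show "AE x in lborel. norm (\<integral>s. norm (G x s) \<partial>lborel) \<le> norm (indicator {0<..<1} x * K x / pi^3)"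
    proof (intro AE_I2)
      fix x
      have "0 \<le> (\<integral>s. norm (G x s) \<partial>lborel)" by simp
      moreover have "indicator {0<..<1} x * K x / pi^3 \<le> \<bar>indicator {0<..<1} x * K x\<bar> / pi^3"
        by (intro divide_right_mono abs_ge_self) simp
      ultimately show "norm (\<integral>s. norm (G x s) \<partial>lborel) \<le> norm (indicator {0<..<1} x * K x / pi^3)"
        using inner_s_norm[of x] by simp
    qed
  qed
  have intG: "integrable (lborel \<Otimes>\<^sub>M lborel) (\<lambda>(x, s). G x s)"
    by (rule lborel_pair.Fubini_integrable) (use intnorm intS in auto)
  have inner_x: "(\<integral>x. G x s \<partial>lborel) = indicator {0<..} s * (s^2 * exp (- pi * s) / 2 * Tc s)" for s
  proof (cases "s > 0")
    case True
    have "(\<integral>x. G x s \<partial>lborel) = (s^2 * exp (- pi * s) / 2) * (LBINT x:{0<..<1}. cos ((2 * s) * ln x) * (artanh x / x))"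
      using True unfolding G_def set_lebesgue_integral_def K_def
      by (simp add: mult_ac flip: integral_mult_right_zero)
    also have "\<dots> = (s^2 * exp (- pi * s) / 2) * Tc s"
      unfolding x_inner(2) Tsum[OF True] Tc_def ..
    finally show ?thesis using True by simp
  qed (simp add: G_def)
  have "(LBINT x:{0<..<1}. h x) = (\<integral>x. (\<integral>s. G x s \<partial>lborel) \<partial>lborel)"
    unfolding set_lebesgue_integral_def inner_s by simp
  also have "\<dots> = (\<integral>s. (\<integral>x. G x s \<partial>lborel) \<partial>lborel)"
    by (rule lborel_pair.Fubini_integral[symmetric]) (use intG in simp)
  also have "\<dots> = (LBINT s:{0<..}. s^2 * exp (- pi * s) / 2 * Tc s)"
    unfolding inner_x set_lebesgue_integral_def by simp
  also have "\<dots> = (2 * catalan - 1) / (16 * pi)"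
    unfolding Tc_def by (rule s_outer(2))
  finally have val: "(LBINT x:{0<..<1}. h x) = (2 * catalan - 1) / (16 * pi)" .
  have "integrable lborel (\<lambda>x. \<integral>s. G x s \<partial>lborel)"
    using lborel_pair.integrable_fst'[OF intG] by simp
  then have sint: "set_integrable lborel {0<..<1} h"
    unfolding set_integrable_def inner_s by simp
  have "(h has_integral (LBINT x:{0<..<1}. h x)) {0<..<1}"
    using set_borel_integral_eq_integral[OF sint] by (simp add: integrable_integral)
  then have "(h has_integral ((2 * catalan - 1) / (16 * pi))) {0<..<1}" unfolding val .
  then show ?thesis unfolding h_def .
qed



end
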